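(* Let $(a_{ij})_{1\le i\le v,\,1\le j\le w}$ be a matrix of nonnegative real numbers and let $\rho,\gamma\ge 0$. Put $a_{i\star}=\sum_{j=1}^w a_{ij}$, $a_{\star j}=\sum_{i=1}^v a_{ij}$ and $e=\sum_{i=1}^v\sum_{j=1}^w a_{ij}$. If $a_{i\star}\ge 2\rho$ for all $i$ and $a_{\star j}\ge 2\gamma$ for all $j$, then $$\sum_{i=1}^v\sum_{j=1}^w a_{ij}(a_{i\star}-\rho)(a_{\star j}-\gamma)\ge e\,(e/v-\rho)(e/w-\gamma),$$ with equality exactly if all $a_{i\star}$ are equal to one another and all $a_{\star j}$ are equal to one another. *)

theory Defs
  imports "HOL-Analysis.Analysis"
begin

end

theory Submission
  imports Defs
begin

lemma ln_lt_minus_one: fixes x :: real assumes "0 < x" "x \<noteq> 1" shows "ln x < x - 1"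
proof -
  define s where "s = sqrt x"
  have s: "s > 0" "s \<noteq> 1" "s * s = x" using assms by (auto simp: s_def)
  have "ln x = 2 * ln s" using assms by (simp add: s_def ln_sqrt)
  also have "\<dots> \<le> 2 * (s - 1)" using ln_le_minus_one[OF s(1)] by simp
  also have "\<dots> < s * s - 1"
  proof -
    have "0 < (s-1)*(s-1)" using s(2) by (auto simp add: zero_less_mult_iff)
    then show ?thesis by (simp add: algebra_simps)
  qed
  finally show ?thesis using s by simp
qed

lemma h1: fixes t :: real assumes "t > 1" shows "(t+1)*ln t - 2*(t-1) > 0"
proof -
  have "(\<lambda>t. (t+1)*ln t - 2*(t-1)) 1 < (\<lambda>t. (t+1)*ln t - 2*(t-1)) t"
  proof (rule DERIV_pos_imp_increasing_open[OF assms])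
    fix x :: real assume x: "1 < x" "x < t"
    have "DERIV (\<lambda>t. (t+1)*ln t - 2*(t-1)) x :> (1 * ln x + (x+1) * (1/x) - 2 * 1)"
      using x by (auto intro!: derivative_eq_intros)
    moreover have "1 * ln x + (x+1) * (1/x) - 2 * 1 > 0"
    proof -
      have "ln (1/x) < 1/x - 1" using x by (intro ln_lt_minus_one) auto
      then have "- ln x < 1/x - 1" using x by (simp add: ln_div)
      moreover have "(x+1)*(1/x) = 1 + 1/x" using x by (simp add: field_simps)
      ultimately show ?thesis by simp
    qed
    ultimately show "\<exists>y. DERIV (\<lambda>t. (t+1)*ln t - 2*(t-1)) x :> y \<and> y > 0" by blast
  next
    show "continuous_on {1..t} (\<lambda>t. (t+1)*ln t - 2*(t-1))"
      by (intro continuous_intros) auto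
  qed
  then show ?thesis by simp
qed

lemma h2: fixes t :: real assumes "0 < t" "t < 1" shows "2*t*ln t - t^2 + 1 > 0"
proof -
  have "(\<lambda>t. 2*t*ln t - t^2 + 1) t > (\<lambda>t. 2*t*ln t - t^2 + 1) 1"
  proof (rule DERIV_neg_imp_decreasing_open[OF assms(2)])
    fix x :: real assume x: "t < x" "x < 1"
    have "DERIV (\<lambda>t. 2*t*ln t - t^2 + 1) x :> (2 * ln x + 2 * x * (1/x) - 2 * x)"
      using x assms by (auto intro!: derivative_eq_intros)
    moreover have "2 * ln x + 2 * x * (1/x) - 2 * x < 0"
      using ln_lt_minus_one[of x] x assms by simp
    ultimately show "\<exists>y. DERIV (\<lambda>t. 2*t*ln t - t^2 + 1) x :> y \<and> y < 0" by blast
  next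
    show "continuous_on {t..1} (\<lambda>t. 2*t*ln t - t^2 + 1)"
      using assms by (intro continuous_intros) auto
  qed
  then show ?thesis by simp
qed

lemma Fpos: fixes t k \<rho> :: real
  assumes "t > 0" "k > 0" "0 \<le> \<rho>" "\<rho> \<le> k" "\<rho> \<le> t * k" "t \<noteq> 1"
  shows "k*(t*ln t - t + 1) - \<rho>*(t - 1 - ln t) > 0"
proof -
  have d: "t - 1 - ln t > 0" using ln_lt_minus_one[OF assms(1) assms(6)] by simp
  show ?thesis
  proof (cases "t > 1")
    case True
    have "\<rho>*(t - 1 - ln t) \<le> k*(t - 1 - ln t)" using d assms by (intro mult_right_mono) auto
    moreover have "k*((t+1)*ln t - 2*(t-1)) > 0" using h1[OF True] assms by simp
    ultimately show ?thesis by (simp add: algebra_simps)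
  next
    case False
    then have t1: "t < 1" using assms by simp
    have "\<rho>*(t - 1 - ln t) \<le> (t*k)*(t - 1 - ln t)" using d assms by (intro mult_right_mono) auto
    moreover have "k*(2*t*ln t - t^2 + 1) > 0" using h2[OF assms(1) t1] assms by simp
    ultimately show ?thesis by (simp add: algebra_simps power2_eq_square)
  qed
qed

lemma Gpos: fixes r m \<rho> :: real
  assumes "0 \<le> \<rho>" "2*\<rho> \<le> r" "2*\<rho> \<le> m" "0 < m" "r \<noteq> m"
  shows "r*ln(r-\<rho>) - m*ln(m-\<rho>) - (ln(m-\<rho>) + m/(m-\<rho>))*(r-m) > 0"
proof -
  define k where "k = m - \<rho>"
  have k: "k > 0" using assms by (simp add: k_def)
  show ?thesis
  proof (cases "r = \<rho>")
    case True
    then have "r = 0" "\<rho> = 0" using assms by auto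
    then show ?thesis using assms by (simp add: algebra_simps)
  next
    case False
    define t where "t = (r - \<rho>)/k"
    have t: "t > 0" using False assms k by (simp add: t_def)
    have rt: "r = \<rho> + t*k" using k by (simp add: t_def)
    have t1: "t \<noteq> 1" using assms rt k_def by auto
    have lnr: "ln (r - \<rho>) = ln t + ln k" using rt t k by (simp add: ln_mult)
    have m: "m = \<rho> + k" by (simp add: k_def)
    have "r*ln(r-\<rho>) - m*ln(m-\<rho>) - (ln(m-\<rho>) + m/(m-\<rho>))*(r-m)
        = k*(t*ln t - t + 1) - \<rho>*(t - 1 - ln t)"
      unfolding lnr using k by (simp add: m rt field_simps)
    also have "\<dots> > 0" using Fpos[OF t k assms(1)] assms rt m t1 by auto
    finally show ?thesis .
  qed
qed

lemma jensen_part: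
  fixes r :: "nat \<Rightarrow> real" and I :: "nat set" and \<rho> :: real
  assumes fin: "finite I" and ne: "I \<noteq> {}" and rho: "0 \<le> \<rho>"
    and rr: "\<And>i. i\<in>I \<Longrightarrow> 2*\<rho> \<le> r i" and pos: "sum r I > 0"
  shows "sum r I * ln (sum r I / card I - \<rho>) \<le> (\<Sum>i\<in>I. r i * ln (r i - \<rho>))"
    and "(\<Sum>i\<in>I. r i * ln (r i - \<rho>)) = sum r I * ln (sum r I / card I - \<rho>) \<Longrightarrow> \<forall>i\<in>I. r i = sum r I / card I"
proof -
  define m where "m = sum r I / card I"
  have cI: "card I > 0" using fin ne by (simp add: card_gt_0_iff)
  have m0: "m > 0" using pos cI by (simp add: m_def)
  have "sum (\<lambda>i. 2*\<rho>) I \<le> sum r I" using rr by (intro sum_mono) auto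
  then have "card I * (2*\<rho>) \<le> sum r I" by simp
  then have m2: "2*\<rho> \<le> m" using cI by (simp add: m_def field_simps)
  define D where "D = ln(m-\<rho>) + m/(m-\<rho>)"
  define G where "G i = r i*ln(r i-\<rho>) - m*ln(m-\<rho>) - D*(r i-m)" for i
  have Gnn: "G i \<ge> 0" if "i \<in> I" for i
  proof (cases "r i = m")
    case True then show ?thesis by (simp add: G_def)
  next
    case False then show ?thesis using Gpos[OF rho rr[OF that] m2 m0 False] by (simp add: G_def D_def)
  qed
  have Gpos': "G i > 0" if "i \<in> I" "r i \<noteq> m" for i
    using Gpos[OF rho rr[OF that(1)] m2 m0 that(2)] by (simp add: G_def D_def)
  have cm: "card I * m = sum r I" using cI by (simp add: m_def)
  have sumG: "sum G I = (\<Sum>i\<in>I. r i * ln (r i - \<rho>)) - sum r I * ln (m - \<rho>)"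
  proof -
    have "sum G I = (\<Sum>i\<in>I. r i * ln (r i - \<rho>)) - card I * (m*ln(m-\<rho>)) - D*(sum r I - card I * m)"
      by (simp add: G_def sum_subtractf sum_distrib_left[symmetric] sum_subtractf)
    also have "\<dots> = (\<Sum>i\<in>I. r i * ln (r i - \<rho>)) - sum r I * ln (m - \<rho>)"
      using cm by (simp add: mult.assoc[symmetric])
    finally show ?thesis .
  qed
  have "sum G I \<ge> 0" using Gnn by (intro sum_nonneg) auto
  then show "sum r I * ln (sum r I / card I - \<rho>) \<le> (\<Sum>i\<in>I. r i * ln (r i - \<rho>))"
    using sumG by (simp add: m_def)
  assume eq: "(\<Sum>i\<in>I. r i * ln (r i - \<rho>)) = sum r I * ln (sum r I / card I - \<rho>)"
  then have "sum G I = 0" using sumG by (simp add: m_def)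
  then have "\<forall>i\<in>I. G i = 0" using sum_nonneg_eq_0_iff[OF fin] Gnn by blast
  then show "\<forall>i\<in>I. r i = sum r I / card I" using Gpos' m_def by fastforce
qed

theorem theorem4p4:
  fixes a :: "nat \<Rightarrow> nat \<Rightarrow> real" and v w :: nat and \<rho> \<gamma> :: real
  assumes "v \<ge> 1" and "w \<ge> 1"
    and nonneg: "\<And>i j. i \<in> {1..v} \<Longrightarrow> j \<in> {1..w} \<Longrightarrow> a i j \<ge> 0"
    and "\<rho> \<ge> 0" and "\<gamma> \<ge> 0"
    and row: "\<And>i. i \<in> {1..v} \<Longrightarrow> (\<Sum>j=1..w. a i j) \<ge> 2 * \<rho>"
    and col: "\<And>j. j \<in> {1..w} \<Longrightarrow> (\<Sum>i=1..v. a i j) \<ge> 2 * \<gamma>"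
  shows "(let e = (\<Sum>i=1..v. \<Sum>j=1..w. a i j);
              S = (\<Sum>i=1..v. \<Sum>j=1..w.
                     a i j * ((\<Sum>l=1..w. a i l) - \<rho>) * ((\<Sum>k=1..v. a k j) - \<gamma>));
              R = e * (e / real v - \<rho>) * (e / real w - \<gamma>)
          in S \<ge> R \<and>
             (S = R \<longleftrightarrow>
                ((\<forall>i\<in>{1..v}. \<forall>i'\<in>{1..v}. (\<Sum>j=1..w. a i j) = (\<Sum>j=1..w. a i' j)) \<and>
                 (\<forall>j\<in>{1..w}. \<forall>j'\<in>{1..w}. (\<Sum>i=1..v. a i j) = (\<Sum>i=1..v. a i j')))))"
proof -
  define r where "r = (\<lambda>i. \<Sum>j=1..w. a i j)"
  define c where "c = (\<lambda>j. \<Sum>i=1..v. a i j)"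
  define e where "e = (\<Sum>i=1..v. \<Sum>j=1..w. a i j)"
  define S where "S = (\<Sum>i=1..v. \<Sum>j=1..w. a i j * (r i - \<rho>) * (c j - \<gamma>))"
  define R where "R = e * (e / real v - \<rho>) * (e / real w - \<gamma>)"
  define EQ where "EQ = ((\<forall>i\<in>{1..v}. \<forall>i'\<in>{1..v}. r i = r i') \<and> (\<forall>j\<in>{1..w}. \<forall>j'\<in>{1..w}. c j = c j'))"
  have er: "e = sum r {1..v}" by (simp add: e_def r_def)
  have ec: "e = sum c {1..w}" unfolding e_def c_def by (rule sum.swap)
  have rnn: "r i \<ge> 0" if "i \<in> {1..v}" for i using nonneg that by (auto simp: r_def intro!: sum_nonneg)
  have cnn: "c j \<ge> 0" if "j \<in> {1..w}" for j using nonneg that by (auto simp: c_def intro!: sum_nonneg)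
  have ale_r: "a i j \<le> r i" if "i \<in> {1..v}" "j \<in> {1..w}" for i j
    unfolding r_def using nonneg that by (intro member_le_sum) auto
  have ale_c: "a i j \<le> c j" if "i \<in> {1..v}" "j \<in> {1..w}" for i j
    unfolding c_def using nonneg that by (intro member_le_sum) auto
  have conv: "S = R" if EQ
  proof -
    have v0: "v > 0" "w > 0" using assms by auto
    have o: "(1::nat) \<in> {1..v}" "(1::nat) \<in> {1..w}" using v0 by auto
    have hr: "\<forall>i\<in>{1..v}. r i = r 1" using \<open>EQ\<close> o unfolding EQ_def by blast
    have "sum r {1..v} = (\<Sum>i=1..v. r 1)" by (rule sum.cong[OF refl]) (use hr in blast)
    then have s1: "e = v * r 1" using er by simp
    have ri: "r i = e / v" if "i \<in> {1..v}" for i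
    proof -
      have "r i = r 1" using hr that by blast
      then show ?thesis using s1 v0 by simp
    qed
    have hc: "\<forall>j\<in>{1..w}. c j = c 1" using \<open>EQ\<close> o unfolding EQ_def by blast
    have "sum c {1..w} = (\<Sum>j=1..w. c 1)" by (rule sum.cong[OF refl]) (use hc in blast)
    then have s2: "e = w * c 1" using ec by simp
    have cj: "c j = e / w" if "j \<in> {1..w}" for j
    proof -
      have "c j = c 1" using hc that by blast
      then show ?thesis using s2 v0 by simp
    qed
    have "S = (\<Sum>i=1..v. \<Sum>j=1..w. a i j * (e/v - \<rho>) * (e/w - \<gamma>))"
      unfolding S_def using ri cj by (intro sum.cong refl) auto
    also have "\<dots> = e * (e / real v - \<rho>) * (e / real w - \<gamma>)"
      by (simp add: e_def sum_distrib_right)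
    finally show ?thesis by (simp add: R_def)
  qed
  have main: "S \<ge> R \<and> (S = R \<longleftrightarrow> EQ)"
  proof (cases "e = 0")
    case True
    then have "\<forall>i\<in>{1..v}. r i = 0" using er rnn sum_nonneg_eq_0_iff[of "{1..v}" r] by auto
    moreover have "\<forall>j\<in>{1..w}. c j = 0" using True ec cnn sum_nonneg_eq_0_iff[of "{1..w}" c] by auto
    ultimately have EQ unfolding EQ_def by auto
    then show ?thesis using conv by auto
  next
    case False
    then have e0: "e > 0" using er rnn by (metis order_le_less sum_nonneg)
    have v0: "v > 0" "w > 0" using assms by auto
    have rr: "2*\<rho> \<le> r i" if "i \<in> {1..v}" for i using row that by (simp add: r_def)
    have cc: "2*\<gamma> \<le> c j" if "j \<in> {1..w}" for j using col that by (simp add: c_def)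
    have "sum (\<lambda>i. 2*\<rho>) {1..v} \<le> sum r {1..v}" using rr by (intro sum_mono) auto
    then have "v * (2*\<rho>) \<le> e" using er by simp
    then have xb: "e/v - \<rho> > 0" using v0 e0 \<open>\<rho> \<ge> 0\<close> by (simp add: field_simps)
    have "sum (\<lambda>j. 2*\<gamma>) {1..w} \<le> sum c {1..w}" using cc by (intro sum_mono) auto
    then have "w * (2*\<gamma>) \<le> e" using ec by simp
    then have yb: "e/w - \<gamma> > 0" using v0 e0 \<open>\<gamma> \<ge> 0\<close> by (simp add: field_simps)
    define M where "M = (e/v - \<rho>) * (e/w - \<gamma>)"
    have M0: "M > 0" using xb yb by (simp add: M_def)
    define L where "L i = ln (r i - \<rho>)" for i
    define K where "K j = ln (c j - \<gamma>)" for j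
    have pw: "a i j * (M * (L i + K j - ln M + 1)) \<le> a i j * ((r i - \<rho>) * (c j - \<gamma>))"
      if ij: "i \<in> {1..v}" "j \<in> {1..w}" for i j
    proof (cases "a i j = 0")
      case True then show ?thesis by simp
    next
      case False
      then have ap: "a i j > 0" using nonneg[OF ij] by simp
      have x: "r i - \<rho> > 0" using ale_r[OF ij] ap rr[OF ij(1)] by simp
      have y: "c j - \<gamma> > 0" using ale_c[OF ij] ap cc[OF ij(2)] by simp
      have "ln ((r i - \<rho>) * (c j - \<gamma>) / M) \<le> (r i - \<rho>) * (c j - \<gamma>) / M - 1"
        using x y M0 by (intro ln_le_minus_one) simp
      moreover have "ln ((r i - \<rho>) * (c j - \<gamma>) / M) = L i + K j - ln M"
        using x y M0 by (simp add: L_def K_def ln_div ln_mult)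
      ultimately have "L i + K j - ln M + 1 \<le> (r i - \<rho>) * (c j - \<gamma>) / M" by simp
      then have "M * (L i + K j - ln M + 1) \<le> (r i - \<rho>) * (c j - \<gamma>)"
        using M0 by (simp add: field_simps)
      then show ?thesis using ap by (intro mult_left_mono) auto
    qed
    have T: "(\<Sum>i=1..v. \<Sum>j=1..w. a i j * (M * (L i + K j - ln M + 1)))
       = M * ((\<Sum>i=1..v. r i * L i) + (\<Sum>j=1..w. c j * K j) + e * (1 - ln M))"
    proof -
      have 1: "(\<Sum>i=1..v. \<Sum>j=1..w. a i j * L i) = (\<Sum>i=1..v. r i * L i)"
        by (simp add: r_def sum_distrib_right)
      have 2: "(\<Sum>i=1..v. \<Sum>j=1..w. a i j * K j) = (\<Sum>j=1..w. c j * K j)"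
        unfolding c_def sum_distrib_right by (rule sum.swap)
      have eq: "a i j * (M * (L i + K j - ln M + 1)) = M * (a i j * L i) + M * (a i j * K j) + (M*(1 - ln M)) * a i j" for i j
        by (simp add: algebra_simps)
      show ?thesis
        unfolding eq sum.distrib sum_distrib_left[symmetric] 1 2 e_def
        by (simp add: algebra_simps sum_distrib_left)
    qed
    have A: "e * ln (e/v - \<rho>) \<le> (\<Sum>i=1..v. r i * L i)"
      using jensen_part(1)[of "{1..v}" \<rho> r] rr er e0 \<open>\<rho> \<ge> 0\<close> v0 by (simp add: L_def)
    have B: "e * ln (e/w - \<gamma>) \<le> (\<Sum>j=1..w. c j * K j)"
      using jensen_part(1)[of "{1..w}" \<gamma> c] cc ec e0 \<open>\<gamma> \<ge> 0\<close> v0 by (simp add: K_def)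
    have lnM: "ln M = ln (e/v - \<rho>) + ln (e/w - \<gamma>)" using xb yb by (simp add: M_def ln_mult)
    have RM: "R = M * e" by (simp add: R_def M_def)
    have S1: "S \<ge> M * ((\<Sum>i=1..v. r i * L i) + (\<Sum>j=1..w. c j * K j) + e * (1 - ln M))"
    proof -
      have "(\<Sum>i=1..v. \<Sum>j=1..w. a i j * (M * (L i + K j - ln M + 1))) \<le> S"
        unfolding S_def using pw by (intro sum_mono) (simp add: mult.assoc)
      then show ?thesis using T by simp
    qed
    have S2: "M * ((\<Sum>i=1..v. r i * L i) + (\<Sum>j=1..w. c j * K j) + e * (1 - ln M)) - R
       = M * (((\<Sum>i=1..v. r i * L i) - e * ln (e/v - \<rho>)) + ((\<Sum>j=1..w. c j * K j) - e * ln (e/w - \<gamma>)))"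
      unfolding RM lnM by (simp add: algebra_simps)
    have ge: "S \<ge> R" using S1 S2 A B M0
      by (smt (verit) mult_nonneg_nonneg)
    have "EQ" if "S = R"
    proof -
      have "M * (((\<Sum>i=1..v. r i * L i) - e * ln (e/v - \<rho>)) + ((\<Sum>j=1..w. c j * K j) - e * ln (e/w - \<gamma>))) \<le> 0"
        using S1 S2 that by linarith
      then have "((\<Sum>i=1..v. r i * L i) - e * ln (e/v - \<rho>)) + ((\<Sum>j=1..w. c j * K j) - e * ln (e/w - \<gamma>)) \<le> 0"
        using M0 by (simp add: mult_le_0_iff)
      then have eA: "(\<Sum>i=1..v. r i * L i) = e * ln (e/v - \<rho>)" and eB: "(\<Sum>j=1..w. c j * K j) = e * ln (e/w - \<gamma>)"
        using A B by linarith+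
      have neV: "{1..v} \<noteq> {}" and neW: "{1..w} \<noteq> {}" using v0 by auto
      have jA: "\<forall>i\<in>{1..v}. r i = sum r {1..v} / card {1..v}"
      proof (rule jensen_part(2)[OF finite_atLeastAtMost neV \<open>\<rho> \<ge> 0\<close> rr])
        show "0 < sum r {1..v}" using e0 er by simp
        show "(\<Sum>i\<in>{1..v}. r i * ln (r i - \<rho>)) = sum r {1..v} * ln (sum r {1..v} / real (card {1..v}) - \<rho>)"
          using eA er by (simp add: L_def)
      qed
      have jB: "\<forall>j\<in>{1..w}. c j = sum c {1..w} / card {1..w}"
      proof (rule jensen_part(2)[OF finite_atLeastAtMost neW \<open>\<gamma> \<ge> 0\<close> cc])
        show "0 < sum c {1..w}" using e0 ec by simp
        show "(\<Sum>j\<in>{1..w}. c j * ln (c j - \<gamma>)) = sum c {1..w} * ln (sum c {1..w} / real (card {1..w}) - \<gamma>)"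
          using eB ec by (simp add: K_def)
      qed
      have cv: "card {1..v} = v" and cw: "card {1..w} = w" by simp_all
      have "\<forall>i\<in>{1..v}. r i = e / v" using jA unfolding er[symmetric] cv by blast
      moreover have "\<forall>j\<in>{1..w}. c j = e / w" using jB unfolding ec[symmetric] cw by blast
      ultimately show ?thesis unfolding EQ_def by simp
    qed
    then show ?thesis using ge conv by auto
  qed
  show ?thesis using main unfolding Let_def S_def R_def EQ_def r_def c_def e_def .
qed

end
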